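(* Let $\nu$ be a charge on $\mathbb{C}$ with compact support, $q\in\mathbb{N}_0$, and suppose that for some $r_0>0$ the integrals $\int_{D(r_0)\cap\mathbb{C}^{\rm up}}\operatorname{Im}\frac1{z^k}\,d\nu(z)$, $1\le k\le q$, converge. Then for all $t\in\mathbb{R}$ $$(\nu^{\mathrm{bal}[q]})^{\mathbb{R}}(t)=(\nu^{\mathrm{bal}})^{\mathbb{R}}(t)+\frac1\pi\sum_{k=1}^q\Bigl(\int_{\mathbb{C}^{\rm up}}\operatorname{Im}\frac1{z^k}\,d\nu(z)\Bigr)\frac{t^k}{k},$$ $$(\nu^{\mathrm{bal}[q]})^+\le|\nu^{\mathrm{bal}[q]}|\le|\nu^{\mathrm{bal}}|+\frac1\pi\sum_{k=1}^q\Bigl|\int_{\mathbb{C}^{\rm up}}\operatorname{Im}\frac1{z^k}\,d\nu(z)\Bigr|\lambda^{[k]},$$ and if $\nu$ is a positive measure, $(\nu^{\mathrm{bal}[q]})^-\le\frac1\pi\sum_{k=1}^q\bigl|\int_{\mathbb{C}^{\rm up}}\operatorname{Im}\frac1{z^k}\,d\nu(z)\bigr|\lambda^{[k]}$, where $\lambda^{[k]}$ is the measure on $\mathbb{R}$ with $d\lambda^{[k]}(t)=|t|^{k-1}dt$.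
   Context: A charge is a real Borel signed measure on $\mathbb{C}$ finite on bounded sets; $|\nu|,\nu^+,\nu^-$ are total, upper, lower variations. $\mathbb{C}^{\rm up}=\{\operatorname{Im}z>0\}$, $\mathbb{C}_{\overline{\rm lw}}=\mathbb{C}\setminus\mathbb{C}^{\rm up}$, $D(r)=\{|z|<r\}$. For $z\in\mathbb{C}^{\rm up}$ and bounded Borel $B$: $\omega(z,B)=\frac1\pi\int_{B\cap\mathbb{R}}\operatorname{Im}\frac1{t-z}dt$, $\Omega^{[q]}(z,B)=\omega(z,B)+\frac1\pi\sum_{k=1}^q\operatorname{Im}(z^{-k})\int_{B\cap\mathbb{R}}t^{k-1}dt$. The balayage of genus $q$ of $\nu$ from $\mathbb{C}^{\rm up}$ is the charge $\nu^{\mathrm{bal}[q]}(B)=\int_{\mathbb{C}^{\rm up}}\Omega^{[q]}(z,B)d\nu(z)+\nu(B\cap\mathbb{C}_{\overline{\rm lw}})$; $\nu^{\mathrm{bal}}:=\nu^{\mathrm{bal}[0]}$. For a charge $\mu$, $\mu^{\mathbb{R}}(x)=\mu([0,x])$ for $x\ge0$ and $\mu^{\mathbb{R}}(x)=-\mu([x,0))$ for $x<0$. *)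

theory Defs
  imports "HOL-Analysis.Analysis"
begin

text \<open>A compactly supported charge \<nu> on the complex plane is represented by its Jordan
decomposition (P, N): two finite Borel measures on complex numbers, mutually singular,
both supported in a compact set. Then \<nu>(B) = P(B) - N(B), |\<nu>| = P + N.\<close>

definition jordan_charge :: "complex measure \<Rightarrow> complex measure \<Rightarrow> bool" where
  "jordan_charge P N \<longleftrightarrow>
     sets P = sets borel \<and> sets N = sets borel \<and> finite_measure P \<and> finite_measure N \<and>
     (\<exists>A\<in>sets borel. emeasure P (- A) = 0 \<and> emeasure N A = 0)"

definition compact_support :: "complex measure \<Rightarrow> complex measure \<Rightarrow> bool" where
  "compact_support P N \<longleftrightarrow>
     (\<exists>K. compact K \<and> emeasure P (- K) = 0 \<and> emeasure N (- K) = 0)"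

definition chg :: "complex measure \<Rightarrow> complex measure \<Rightarrow> complex set \<Rightarrow> real" where
  "chg P N B = measure P B - measure N B"

definition cint :: "complex measure \<Rightarrow> complex measure \<Rightarrow> complex set \<Rightarrow> (complex \<Rightarrow> real) \<Rightarrow> real" where
  "cint P N S f = (LINT z:S|P. f z) - (LINT z:S|N. f z)"

definition Cup :: "complex set" where "Cup = {z. Im z > 0}"
definition Clw :: "complex set" where "Clw = - Cup"

definition rtrace :: "complex set \<Rightarrow> real set" where
  "rtrace B = {t. complex_of_real t \<in> B}"

definition omega :: "complex \<Rightarrow> complex set \<Rightarrow> real" where
  "omega z B = (1 / pi) * (LINT t:rtrace B|lborel. Im (1 / (complex_of_real t - z)))"

definition Omega :: "nat \<Rightarrow> complex \<Rightarrow> complex set \<Rightarrow> real" where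
  "Omega q z B = omega z B +
     (1 / pi) * (\<Sum>k=1..q. Im (1 / z ^ k) * (LINT t:rtrace B|lborel. t ^ (k - 1)))"

text \<open>Balayage of genus q of the charge (P,N) from the upper half-plane.\<close>
definition bal :: "nat \<Rightarrow> complex measure \<Rightarrow> complex measure \<Rightarrow> complex set \<Rightarrow> real" where
  "bal q P N B = cint P N Cup (\<lambda>z. Omega q z B) + chg P N (B \<inter> Clw)"

definition distR :: "(complex set \<Rightarrow> real) \<Rightarrow> real \<Rightarrow> real" where
  "distR \<mu> x = (if 0 \<le> x then \<mu> (complex_of_real ` {0..x})
                 else - \<mu> (complex_of_real ` {x..<0}))"

definition pos_var :: "(complex set \<Rightarrow> real) \<Rightarrow> complex set \<Rightarrow> ereal" where
  "pos_var \<mu> B = (SUP A \<in> {A. A \<in> sets borel \<and> A \<subseteq> B}. ereal (\<mu> A))"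

definition neg_var :: "(complex set \<Rightarrow> real) \<Rightarrow> complex set \<Rightarrow> ereal" where
  "neg_var \<mu> B = (SUP A \<in> {A. A \<in> sets borel \<and> A \<subseteq> B}. ereal (- \<mu> A))"

definition tot_var :: "(complex set \<Rightarrow> real) \<Rightarrow> complex set \<Rightarrow> ereal" where
  "tot_var \<mu> B = (SUP F \<in> {F. finite F \<and> disjoint F \<and> F \<subseteq> sets borel \<and> \<Union>F \<subseteq> B}.
                    ereal (\<Sum>A\<in>F. \<bar>\<mu> A\<bar>))"

definition lam :: "nat \<Rightarrow> complex set \<Rightarrow> real" where
  "lam k B = (LINT t:rtrace B|lborel. \<bar>t\<bar> ^ (k - 1))"

end

theory Submission imports Defs begin

lemma rtrace_borel: "A \<in> sets borel \<Longrightarrow> rtrace A \<in> sets borel"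
proof -
  assume A: "A \<in> sets borel"
  have "(complex_of_real) \<in> borel_measurable borel"
    by (intro borel_measurable_continuous_onI continuous_intros)
  from measurable_sets_borel[OF this A] show ?thesis by (simp add: rtrace_def vimage_def)
qed

lemma omega_integrand_meas:
  assumes A: "A \<in> sets borel"
  shows "(\<lambda>(z,t). indicator (rtrace A) t *\<^sub>R Im (1 / (complex_of_real t - z))) \<in> borel_measurable (borel \<Otimes>\<^sub>M (borel::real measure))"
proof -
  have c: "(\<lambda>p::complex\<times>real. complex_of_real (snd p) - fst p) \<in> borel_measurable borel"
    by (intro borel_measurable_continuous_onI continuous_intros)
  have i: "(\<lambda>w::complex. Im (1 / w)) \<in> borel_measurable borel" by measurable
  have "(\<lambda>p::complex\<times>real. Im (1 / (complex_of_real (snd p) - fst p))) \<in> borel_measurable borel"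
    using measurable_compose[OF c i] by (simp add: o_def)
  then have g: "(\<lambda>p::complex\<times>real. Im (1 / (complex_of_real (snd p) - fst p))) \<in> borel_measurable (borel \<Otimes>\<^sub>M borel)"
    by (simp add: borel_prod)
  have r: "rtrace A \<in> sets borel" using rtrace_borel[OF A] .
  have h: "(\<lambda>p::complex\<times>real. indicator (rtrace A) (snd p) :: real) \<in> borel_measurable (borel \<Otimes>\<^sub>M borel)"
    using r by measurable
  have "(\<lambda>p::complex\<times>real. indicator (rtrace A) (snd p) *\<^sub>R Im (1 / (complex_of_real (snd p) - fst p))) \<in> borel_measurable (borel \<Otimes>\<^sub>M borel)"
    using h g by (intro borel_measurable_scaleR)
  then show ?thesis by (simp add: case_prod_beta')
qed

lemma omega_meas:
  assumes A: "A \<in> sets borel"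
  shows "(\<lambda>z. omega z A) \<in> borel_measurable borel"
proof -
  have "(\<lambda>z. LINT t:rtrace A|lborel. Im (1 / (complex_of_real t - z))) \<in> borel_measurable borel"
    unfolding set_lebesgue_integral_def
    apply (rule lborel.borel_measurable_lebesgue_integral)
    using omega_integrand_meas[OF A] by (simp add: measurable_cong_sets[OF sets_pair_measure_cong[OF refl sets_lborel] refl])
  then show ?thesis unfolding omega_def by measurable
qed

lemma Im_inv_eq: "Im (1 / (complex_of_real t - z)) = Im z / ((t - Re z)^2 + (Im z)^2)"
  by (simp add: Im_divide power2_eq_square algebra_simps)

lemma rtrace_bounded:
  assumes "bounded A" obtains R where "R \<ge> 0" "rtrace A \<subseteq> {-R..R}"
proof -
  from assms obtain a where a: "\<forall>x\<in>A. norm x \<le> a" by (auto simp: bounded_iff)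
  then have "rtrace A \<subseteq> {-max a 0..max a 0}" by (force simp: rtrace_def abs_le_iff)
  then show ?thesis using that by (meson max.cobounded2)
qed

lemma arctan_FTC:
  fixes x y R :: real assumes y: "y > 0" and R: "R \<ge> 0"
  shows "(LINT t:{-R..R}|lborel. y / ((t - x)^2 + y^2)) = arctan ((R - x)/y) - arctan ((-R - x)/y)"
proof -
  have "integral\<^sup>L lborel (\<lambda>t. indicator {-R .. R} t *\<^sub>R (y / ((t - x)^2 + y^2))) = arctan ((R - x)/y) - arctan ((-R - x)/y)"
  proof (rule integral_FTC_atLeastAtMost)
    show "- R \<le> R" using R by simp
    fix t
    have d: "((\<lambda>t. arctan ((t - x)/y)) has_real_derivative y / ((t - x)^2 + y^2)) (at t)"
      using y by (auto intro!: derivative_eq_intros simp: field_simps power2_eq_square)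
    with d show "((\<lambda>t. arctan ((t - x)/y)) has_vector_derivative (y / ((t - x)^2 + y^2))) (at t within {-R..R})"
      by (auto simp: has_real_derivative_iff_has_vector_derivative[symmetric] intro: has_field_derivative_at_within)
  next
    have "\<And>t. (t - x)^2 + y^2 \<noteq> 0" using y by (metis add_nonneg_pos not_less_iff_gr_or_eq zero_le_power2 zero_less_power2)
    then show "continuous_on {-R..R} (\<lambda>t. y / ((t - x)^2 + y^2))"
      by (intro continuous_intros) auto
  qed
  then show ?thesis by (simp add: set_lebesgue_integral_def)
qed

lemma omega_bounds:
  assumes A: "A \<in> sets borel" "bounded A" and z: "Im z > 0"
  shows "0 \<le> omega z A" "omega z A \<le> 1"
proof -
  obtain R where R: "R \<ge> 0" "rtrace A \<subseteq> {-R..R}" using rtrace_bounded[OF A(2)] by blast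
  define f where "f t = Im z / ((t - Re z)^2 + (Im z)^2)" for t
  have fpos: "0 \<le> f t" for t using z by (simp add: f_def)
  have fe: "Im (1 / (complex_of_real t - z)) = f t" for t by (simp add: f_def Im_inv_eq)
  have nz: "\<And>t. (t - Re z)^2 + (Im z)^2 \<noteq> 0" using z by (metis add_nonneg_pos not_less_iff_gr_or_eq zero_le_power2 zero_less_power2)
  have iR: "set_integrable lborel {-R..R} f"
    unfolding f_def by (rule borel_integrable_atLeastAtMost') (use nz in \<open>intro continuous_intros, auto\<close>)
  have iA: "set_integrable lborel (rtrace A) f"
    by (rule set_integrable_subset[OF iR]) (use rtrace_borel[OF A(1)] R in auto)
  have o: "omega z A = (1/pi) * (LINT t:rtrace A|lborel. f t)" by (simp add: omega_def fe)
  have "0 \<le> (LINT t:rtrace A|lborel. f t)"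
    unfolding set_lebesgue_integral_def by (rule Bochner_Integration.integral_nonneg) (simp add: fpos)
  then show "0 \<le> omega z A" using o by simp
  have "(LINT t:rtrace A|lborel. f t) \<le> (LINT t:{-R..R}|lborel. f t)"
    using iA iR unfolding set_lebesgue_integral_def set_integrable_def
    by (rule integral_mono) (use R fpos in \<open>auto simp: indicator_def\<close>)
  also have "\<dots> = arctan ((R - Re z)/Im z) - arctan ((-R - Re z)/Im z)"
    unfolding f_def by (rule arctan_FTC[OF z R(1)])
  also have "\<dots> \<le> pi" using arctan_ubound[of "(R - Re z)/Im z"] arctan_lbound[of "(-R - Re z)/Im z"] by linarith
  finally have "(1/pi) * (LINT t:rtrace A|lborel. f t) \<le> (1/pi) * pi" by (intro mult_left_mono) auto
  then show "omega z A \<le> 1" using o by simp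
qed

lemma ck_int:
  assumes A: "A \<in> sets borel" "bounded A"
  shows "set_integrable lborel (rtrace A) (\<lambda>t::real. t^(k-1))"
    "set_integrable lborel (rtrace A) (\<lambda>t::real. \<bar>t\<bar>^(k-1))"
proof -
  obtain R where R: "R \<ge> 0" "rtrace A \<subseteq> {-R..R}" using rtrace_bounded[OF A(2)] by blast
  have "set_integrable lborel {-R..R} (\<lambda>t::real. t^(k-1))"
    by (rule borel_integrable_atLeastAtMost') (intro continuous_intros)
  then show "set_integrable lborel (rtrace A) (\<lambda>t::real. t^(k-1))"
    by (rule set_integrable_subset) (use rtrace_borel[OF A(1)] R in auto)
  have "set_integrable lborel {-R..R} (\<lambda>t::real. \<bar>t\<bar>^(k-1))"
    by (rule borel_integrable_atLeastAtMost') (intro continuous_intros)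
  then show "set_integrable lborel (rtrace A) (\<lambda>t::real. \<bar>t\<bar>^(k-1))"
    by (rule set_integrable_subset) (use rtrace_borel[OF A(1)] R in auto)
qed

lemma ck_bound:
  assumes A: "A \<in> sets borel" "bounded A"
  shows "\<bar>LINT t:rtrace A|lborel. t^(k-1)\<bar> \<le> lam k A"
proof -
  have "\<bar>LINT t:rtrace A|lborel. t^(k-1)\<bar> = norm (integral\<^sup>L lborel (\<lambda>t. indicator (rtrace A) t *\<^sub>R t^(k-1)))"
    by (simp add: set_lebesgue_integral_def)
  also have "\<dots> \<le> integral\<^sup>L lborel (\<lambda>t. norm (indicator (rtrace A) t *\<^sub>R t^(k-1)))"
    by (rule integral_norm_bound)
  also have "\<dots> = lam k A"
    unfolding lam_def set_lebesgue_integral_def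
    by (rule Bochner_Integration.integral_cong) (auto simp: indicator_def power_abs)
  finally show ?thesis .
qed

lemma lam_sum:
  assumes F: "finite F" "disjoint F" "F \<subseteq> sets borel" "\<Union>F \<subseteq> B" and B: "B \<in> sets borel" "bounded B"
  shows "(\<Sum>A\<in>F. lam k A) \<le> lam k B"
proof -
  have Ab: "A \<in> sets borel" "bounded A" if "A \<in> F" for A
  proof -
    show "A \<in> sets borel" using that F by auto
    have "A \<subseteq> B" using that F(4) by blast
    then show "bounded A" using B(2) bounded_subset by blast
  qed
  have "(\<Sum>A\<in>F. lam k A) = (\<Sum>A\<in>F. integral\<^sup>L lborel (\<lambda>t. indicator (rtrace A) t *\<^sub>R \<bar>t\<bar>^(k-1)))"
    by (simp add: lam_def set_lebesgue_integral_def)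
  also have "\<dots> = integral\<^sup>L lborel (\<lambda>t. \<Sum>A\<in>F. indicator (rtrace A) t *\<^sub>R \<bar>t\<bar>^(k-1))"
    by (rule Bochner_Integration.integral_sum[symmetric]) (use ck_int(2)[OF Ab] in \<open>auto simp: set_integrable_def\<close>)
  also have "\<dots> = integral\<^sup>L lborel (\<lambda>t. indicator (\<Union>(rtrace ` F)) t *\<^sub>R \<bar>t\<bar>^(k-1))"
  proof (rule Bochner_Integration.integral_cong[OF refl])
    fix t
    have dj: "disjoint_family_on rtrace F"
      using F(2) unfolding disjoint_family_on_def disjoint_def rtrace_def by blast
    show "(\<Sum>A\<in>F. indicator (rtrace A) t *\<^sub>R \<bar>t\<bar>^(k-1)) = indicator (\<Union>(rtrace ` F)) t *\<^sub>R \<bar>t\<bar>^(k-1)"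
      by (simp add: indicator_UN_disjoint[OF F(1) dj] sum_distrib_right)
  qed
  also have "\<dots> \<le> integral\<^sup>L lborel (\<lambda>t. indicator (rtrace B) t *\<^sub>R \<bar>t\<bar>^(k-1))"
  proof (rule integral_mono)
    have "set_integrable lborel (\<Union>(rtrace ` F)) (\<lambda>t::real. \<bar>t\<bar>^(k-1))"
      by (rule set_integrable_subset[OF ck_int(2)[OF B]])
         (use F rtrace_borel in \<open>auto intro!: sets.finite_UN simp: rtrace_def\<close>)
    then show "integrable lborel (\<lambda>t. indicator (\<Union>(rtrace ` F)) t *\<^sub>R \<bar>t\<bar>^(k-1))"
      by (simp add: set_integrable_def)
    show "integrable lborel (\<lambda>t. indicator (rtrace B) t *\<^sub>R \<bar>t\<bar>^(k-1))"
      using ck_int(2)[OF B] by (simp add: set_integrable_def)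
    fix t
    show "indicator (\<Union>(rtrace ` F)) t *\<^sub>R \<bar>t\<bar>^(k-1) \<le> indicator (rtrace B) t *\<^sub>R (\<bar>t\<bar>::real)^(k-1)"
      using F(4) by (auto simp: indicator_def rtrace_def)
  qed
  also have "\<dots> = lam k B" by (simp add: lam_def set_lebesgue_integral_def)
  finally show ?thesis .
qed

lemma lam_mono:
  assumes "A \<in> sets borel" "A \<subseteq> B" "B \<in> sets borel" "bounded B"
  shows "lam k A \<le> lam k B"
  using lam_sum[of "{A}" B k] assms by (simp add: disjoint_def)

lemma Cup_borel: "Cup \<in> sets borel"
proof -
  have "open Cup" unfolding Cup_def by (intro open_Collect_less continuous_intros)
  then show ?thesis by simp
qed

lemma Im_pow_int:
  assumes M: "finite_measure M" "sets M = sets borel" and r0: "r0 > 0"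
    and i: "set_integrable M (ball 0 r0 \<inter> Cup) (\<lambda>z. Im (1 / z ^ k))"
  shows "set_integrable M Cup (\<lambda>z. Im (1 / z ^ k))"
proof -
  have meas: "(\<lambda>z::complex. Im (1 / z ^ k)) \<in> borel_measurable M"
    by (subst measurable_cong_sets[OF M(2) refl]) measurable
  have S: "Cup - ball 0 r0 \<in> sets M" using M(2) Cup_borel by auto
  have "set_integrable M (Cup - ball 0 r0) (\<lambda>z. Im (1 / z ^ k))"
    unfolding set_integrable_def
  proof (rule finite_measure.integrable_const_bound[OF M(1), where B = "1 / r0 ^ k"])
    show "(\<lambda>x. indicat_real (Cup - ball 0 r0) x *\<^sub>R Im (1 / x ^ k)) \<in> borel_measurable M"
      using meas S by measurable
    show "AE x in M. norm (indicat_real (Cup - ball 0 r0) x *\<^sub>R Im (1 / x ^ k)) \<le> 1 / r0 ^ k"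
    proof (rule AE_I2)
      fix x
      show "norm (indicat_real (Cup - ball 0 r0) x *\<^sub>R Im (1 / x ^ k)) \<le> 1 / r0 ^ k"
      proof (cases "x \<in> Cup - ball 0 r0")
        case True
        then have "norm x \<ge> r0" by auto
        then have nx: "norm x ^ k \<ge> r0 ^ k" "norm x > 0" using r0 by (auto intro: power_mono)
        then have "1 / norm x ^ k \<le> 1 / r0 ^ k" using r0 by (intro divide_left_mono mult_pos_pos zero_less_power) auto
        moreover have "\<bar>Im (1 / x ^ k)\<bar> \<le> norm (1 / x ^ k)" by (rule abs_Im_le_cmod)
        moreover have "norm (1 / x ^ k) = 1 / norm x ^ k" by (simp add: norm_divide norm_power)
        ultimately show ?thesis using True by simp
      qed (use r0 in simp)
    qed
  qed
  then have "set_integrable M ((ball 0 r0 \<inter> Cup) \<union> (Cup - ball 0 r0)) (\<lambda>z. Im (1 / z ^ k))"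
    by (rule set_integrable_Un[OF i]) (use M(2) Cup_borel S in auto)
  moreover have "(ball 0 r0 \<inter> Cup) \<union> (Cup - ball 0 r0) = Cup" by auto
  ultimately show ?thesis by simp
qed

lemma omega_int:
  assumes M: "finite_measure M" "sets M = sets borel" and A: "A \<in> sets borel" "bounded A"
  shows "set_integrable M Cup (\<lambda>z. omega z A)"
  unfolding set_integrable_def
proof (rule finite_measure.integrable_const_bound[OF M(1), where B = 1])
  have "(\<lambda>z. omega z A) \<in> borel_measurable M"
    by (subst measurable_cong_sets[OF M(2) refl]) (rule omega_meas[OF A(1)])
  then show "(\<lambda>x. indicat_real Cup x *\<^sub>R omega x A) \<in> borel_measurable M"
    using M(2) Cup_borel by measurable
  show "AE x in M. norm (indicat_real Cup x *\<^sub>R omega x A) \<le> 1"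
    by (rule AE_I2) (use omega_bounds[OF A] in \<open>auto simp: indicator_def Cup_def\<close>)
qed

lemma lin:
  assumes M: "finite_measure M" "sets M = sets borel" and A: "A \<in> sets borel" "bounded A"
    and I: "\<forall>k\<in>{1..q}. set_integrable M Cup (\<lambda>z. Im (1 / z ^ k))"
  shows "(LINT z:Cup|M. Omega q z A) = (LINT z:Cup|M. Omega 0 z A) +
     (1/pi) * (\<Sum>k=1..q. (LINT z:Cup|M. Im (1 / z ^ k)) * (LINT t:rtrace A|lborel. t^(k-1)))"
proof -
  define c where "c k = (LINT t:rtrace A|lborel. t^(k-1))" for k
  have io: "integrable M (\<lambda>z. indicator Cup z *\<^sub>R omega z A)"
    using omega_int[OF M A] by (simp add: set_integrable_def)
  have ik: "integrable M (\<lambda>z. indicator Cup z *\<^sub>R Im (1/z^k))" if "k \<in> {1..q}" for k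
    using I that by (simp add: set_integrable_def)
  have isum: "integrable M (\<lambda>z. \<Sum>k=1..q. (indicator Cup z *\<^sub>R Im (1/z^k)) * c k)"
    using ik by (auto intro!: Bochner_Integration.integrable_sum integrable_mult_left)
  have "(LINT z:Cup|M. Omega q z A) = integral\<^sup>L M (\<lambda>z. indicator Cup z *\<^sub>R omega z A +
      (1/pi) * (\<Sum>k=1..q. (indicator Cup z *\<^sub>R Im (1/z^k)) * c k))"
    unfolding set_lebesgue_integral_def Omega_def c_def
    by (intro Bochner_Integration.integral_cong) (auto simp: indicator_def)
  also have "\<dots> = integral\<^sup>L M (\<lambda>z. indicator Cup z *\<^sub>R omega z A) +
      (1/pi) * (\<Sum>k=1..q. integral\<^sup>L M (\<lambda>z. indicator Cup z *\<^sub>R Im (1/z^k)) * c k)"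
    using io isum ik
    by (simp add: Bochner_Integration.integral_add Bochner_Integration.integral_sum
                  integrable_mult_right)
  also have "\<dots> = (LINT z:Cup|M. Omega 0 z A) +
     (1/pi) * (\<Sum>k=1..q. (LINT z:Cup|M. Im (1 / z ^ k)) * c k)"
    by (simp add: set_lebesgue_integral_def Omega_def)
  finally show ?thesis by (simp add: c_def)
qed

lemma pow_int_pos:
  assumes k: "k \<ge> 1" and t: "0 \<le> t"
  shows "(LINT s:{0..t}|lborel. s^(k-1)) = t^k / real k"
proof -
  have "integral\<^sup>L lborel (\<lambda>s. indicator {0 .. t} s *\<^sub>R (s^(k-1))) = t^k / real k - 0^k / real k"
  proof (rule integral_FTC_atLeastAtMost[OF t])
    fix s
    have "((\<lambda>s. s^k / real k) has_real_derivative s^(k-1)) (at s)"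
      using k by (auto intro!: derivative_eq_intros)
    then show "((\<lambda>s. s^k / real k) has_vector_derivative s^(k-1)) (at s within {0..t})"
      by (auto simp: has_real_derivative_iff_has_vector_derivative[symmetric] intro: has_field_derivative_at_within)
  qed (intro continuous_intros)
  then show ?thesis using k by (simp add: set_lebesgue_integral_def)
qed

lemma pow_int_neg:
  assumes k: "k \<ge> 1" and t: "t \<le> 0"
  shows "(LINT s:{t..<0}|lborel. s^(k-1)) = - (t^k / real k)"
proof -
  have "integral\<^sup>L lborel (\<lambda>s. indicator {t .. 0} s *\<^sub>R (s^(k-1))) = 0^k / real k - t^k / real k"
  proof (rule integral_FTC_atLeastAtMost[OF t])
    fix s
    have "((\<lambda>s. s^k / real k) has_real_derivative s^(k-1)) (at s)"
      using k by (auto intro!: derivative_eq_intros)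
    then show "((\<lambda>s. s^k / real k) has_vector_derivative s^(k-1)) (at s within {t..0})"
      by (auto simp: has_real_derivative_iff_has_vector_derivative[symmetric] intro: has_field_derivative_at_within)
  qed (intro continuous_intros)
  moreover have "integral\<^sup>L lborel (\<lambda>s. indicator {t ..< 0} s *\<^sub>R (s^(k-1))) = integral\<^sup>L lborel (\<lambda>s. indicator {t .. 0} s *\<^sub>R ((s::real)^(k-1)))"
    by (rule integral_cong_AE) (auto intro!: AE_I'[of "{0}"] simp: indicator_def)
  ultimately show ?thesis using k by (simp add: set_lebesgue_integral_def)
qed

lemma N_null:
  assumes charge: "jordan_charge P N" and pos: "\<forall>B\<in>sets borel. 0 \<le> chg P N B"
  shows "AE x in N. False"
proof -
  from charge obtain S where S: "S \<in> sets borel" "emeasure P (- S) = 0" "emeasure N S = 0"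
    and sP: "sets P = sets borel" and sN: "sets N = sets borel" and fN: "finite_measure N"
    unfolding jordan_charge_def by blast
  have cS: "- S \<in> sets borel" using S(1) by auto
  have "0 \<le> chg P N (- S)" using pos cS by blast
  moreover have "measure P (- S) = 0" using S(2) by (simp add: measure_def)
  ultimately have "measure N (- S) \<le> 0" by (simp add: chg_def)
  then have "measure N (- S) = 0" by (simp add: antisym)
  then have "emeasure N (- S) = 0" using finite_measure.emeasure_eq_measure[OF fN] by simp
  then have n2: "- S \<in> null_sets N" using cS sN by (auto intro: null_setsI)
  have n1: "S \<in> null_sets N" using S sN by (auto intro: null_setsI)
  show ?thesis using AE_not_in[OF n1] AE_not_in[OF n2] by eventually_elim auto
qed

definition Ik :: "complex measure \<Rightarrow> complex measure \<Rightarrow> nat \<Rightarrow> real" where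
  "Ik P N k = cint P N Cup (\<lambda>z. Im (1 / z ^ k))"

definition ck :: "complex set \<Rightarrow> nat \<Rightarrow> real" where
  "ck A k = (LINT t:rtrace A|lborel. t^(k-1))"

lemma key_eq:
  assumes fP: "finite_measure P" and sP: "sets P = sets borel"
    and fN: "finite_measure N" and sN: "sets N = sets borel"
    and IP: "\<forall>k\<in>{1..q}. set_integrable P Cup (\<lambda>z. Im (1 / z ^ k))"
    and IN: "\<forall>k\<in>{1..q}. set_integrable N Cup (\<lambda>z. Im (1 / z ^ k))"
    and A: "A \<in> sets borel" "bounded A"
  shows "bal q P N A = bal 0 P N A + (1/pi) * (\<Sum>k=1..q. Ik P N k * ck A k)"
    unfolding bal_def cint_def lin[OF fP sP A IP] lin[OF fN sN A IN] Ik_def ck_def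
    by (simp only: left_diff_distrib sum_subtractf) (simp add: field_simps)

lemma key_bounds:
  assumes fP: "finite_measure P" and sP: "sets P = sets borel"
    and fN: "finite_measure N" and sN: "sets N = sets borel"
    and IP: "\<forall>k\<in>{1..q}. set_integrable P Cup (\<lambda>z. Im (1 / z ^ k))"
    and IN: "\<forall>k\<in>{1..q}. set_integrable N Cup (\<lambda>z. Im (1 / z ^ k))"
    and A: "A \<in> sets borel" "bounded A"
  shows "\<bar>bal q P N A\<bar> \<le> \<bar>bal 0 P N A\<bar> + (1/pi) * (\<Sum>k=1..q. \<bar>Ik P N k\<bar> * lam k A)"
    and "- bal q P N A \<le> - bal 0 P N A + (1/pi) * (\<Sum>k=1..q. \<bar>Ik P N k\<bar> * lam k A)"
proof -
  note key = key_eq[OF fP sP fN sN IP IN A]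
  have "\<bar>\<Sum>k=1..q. Ik P N k * ck A k\<bar> \<le> (\<Sum>k=1..q. \<bar>Ik P N k * ck A k\<bar>)" by (rule sum_abs)
  also have "\<dots> \<le> (\<Sum>k=1..q. \<bar>Ik P N k\<bar> * lam k A)"
    by (intro sum_mono) (use ck_bound[OF A] in \<open>auto simp: abs_mult ck_def intro!: mult_left_mono\<close>)
  finally have s: "\<bar>\<Sum>k=1..q. Ik P N k * ck A k\<bar> \<le> (\<Sum>k=1..q. \<bar>Ik P N k\<bar> * lam k A)" .
  then have s': "\<bar>(1/pi) * (\<Sum>k=1..q. Ik P N k * ck A k)\<bar> \<le> (1/pi) * (\<Sum>k=1..q. \<bar>Ik P N k\<bar> * lam k A)"
    by (simp add: abs_mult divide_right_mono)
  show "\<bar>bal q P N A\<bar> \<le> \<bar>bal 0 P N A\<bar> + (1/pi) * (\<Sum>k=1..q. \<bar>Ik P N k\<bar> * lam k A)"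
    using key s' by linarith
  show "- bal q P N A \<le> - bal 0 P N A + (1/pi) * (\<Sum>k=1..q. \<bar>Ik P N k\<bar> * lam k A)"
    using key s' by linarith
qed

lemma part1_lem:
  assumes fP: "finite_measure P" and sP: "sets P = sets borel"
    and fN: "finite_measure N" and sN: "sets N = sets borel"
    and IP: "\<forall>k\<in>{1..q}. set_integrable P Cup (\<lambda>z. Im (1 / z ^ k))"
    and IN: "\<forall>k\<in>{1..q}. set_integrable N Cup (\<lambda>z. Im (1 / z ^ k))"
  shows "distR (bal q P N) t = distR (bal 0 P N) t + (1 / pi) * (\<Sum>k=1..q. Ik P N k * t ^ k / real k)"
proof (cases "0 \<le> t")
  case True
  define A where "A = complex_of_real ` {0..t}"
  have cA: "compact A" unfolding A_def by (intro compact_continuous_image continuous_intros) auto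
  then have A: "A \<in> sets borel" "bounded A" by (auto intro: borel_closed compact_imp_closed compact_imp_bounded)
  have rA: "rtrace A = {0..t}" by (auto simp: A_def rtrace_def)
  have "ck A k = t^k / real k" if "k \<in> {1..q}" for k
    using pow_int_pos[of k t] that True by (simp add: ck_def rA)
  then have "(\<Sum>k=1..q. Ik P N k * ck A k) = (\<Sum>k=1..q. Ik P N k * t ^ k / real k)"
    by (intro sum.cong) auto
  then show ?thesis using key_eq[OF fP sP fN sN IP IN A] True by (simp add: distR_def A_def)
next
  case False
  define A where "A = complex_of_real ` {t..0} - {0}"
  have cA: "compact (complex_of_real ` {t..0})" by (intro compact_continuous_image continuous_intros) auto
  have b1: "complex_of_real ` {t..0} \<in> sets borel" using cA by (intro borel_closed compact_imp_closed)
  have A1: "A \<in> sets borel" unfolding A_def using b1 by (intro sets.Diff) auto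
  have A2: "bounded A" unfolding A_def using bounded_subset[OF compact_imp_bounded[OF cA]] by blast
  note A = A1 A2
  have A': "A = complex_of_real ` {t..<0}" unfolding A_def by auto
  have rA: "rtrace A = {t..<0}" by (auto simp: A' rtrace_def)
  have "ck A k = - (t^k / real k)" if "k \<in> {1..q}" for k
    using pow_int_neg[of k t] that False by (simp add: ck_def rA)
  then have "(\<Sum>k=1..q. Ik P N k * ck A k) = - (\<Sum>k=1..q. Ik P N k * t ^ k / real k)"
    by (simp add: sum_negf[symmetric])
  then show ?thesis using key_eq[OF fP sP fN sN IP IN A] False by (simp add: distR_def A'[symmetric])
qed

lemma part2a_lem: "pos_var (bal q P N) B \<le> tot_var (bal q P N) B"
  unfolding pos_var_def
proof (rule SUP_least)
  fix A assume A: "A \<in> {A. A \<in> sets borel \<and> A \<subseteq> B}"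
  have "ereal (bal q P N A) \<le> ereal (\<Sum>X\<in>{A}. \<bar>bal q P N X\<bar>)" by simp
  also have "\<dots> \<le> tot_var (bal q P N) B"
    unfolding tot_var_def by (rule SUP_upper) (use A in \<open>auto simp: disjoint_def\<close>)
  finally show "ereal (bal q P N A) \<le> tot_var (bal q P N) B" .
qed

lemma part2b_real:
  assumes fP: "finite_measure P" and sP: "sets P = sets borel"
    and fN: "finite_measure N" and sN: "sets N = sets borel"
    and IP: "\<forall>k\<in>{1..q}. set_integrable P Cup (\<lambda>z. Im (1 / z ^ k))"
    and IN: "\<forall>k\<in>{1..q}. set_integrable N Cup (\<lambda>z. Im (1 / z ^ k))"
    and B: "B \<in> sets borel" "bounded B"
    and F: "finite F" "disjoint F" "F \<subseteq> sets borel" "\<Union>F \<subseteq> B"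
  shows "(\<Sum>A\<in>F. \<bar>bal q P N A\<bar>) \<le> (\<Sum>A\<in>F. \<bar>bal 0 P N A\<bar>) + (1/pi) * (\<Sum>k=1..q. \<bar>Ik P N k\<bar> * lam k B)"
proof -
  have Ab: "A \<in> sets borel" "bounded A" if "A \<in> F" for A
  proof -
    show "A \<in> sets borel" using that F by auto
    have "A \<subseteq> B" using that F by blast
    then show "bounded A" using B(2) bounded_subset by blast
  qed
  have "(\<Sum>A\<in>F. \<bar>bal q P N A\<bar>) \<le> (\<Sum>A\<in>F. \<bar>bal 0 P N A\<bar> + (1/pi) * (\<Sum>k=1..q. \<bar>Ik P N k\<bar> * lam k A))"
    by (intro sum_mono key_bounds(1)[OF fP sP fN sN IP IN] Ab)
  also have "\<dots> = (\<Sum>A\<in>F. \<bar>bal 0 P N A\<bar>) + (1/pi) * (\<Sum>k=1..q. \<bar>Ik P N k\<bar> * (\<Sum>A\<in>F. lam k A))"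
    by (simp add: sum.distrib sum_distrib_left sum.swap[of _ F])
  also have "\<dots> \<le> (\<Sum>A\<in>F. \<bar>bal 0 P N A\<bar>) + (1/pi) * (\<Sum>k=1..q. \<bar>Ik P N k\<bar> * lam k B)"
  proof -
    have "(\<Sum>k=1..q. \<bar>Ik P N k\<bar> * (\<Sum>A\<in>F. lam k A)) \<le> (\<Sum>k=1..q. \<bar>Ik P N k\<bar> * lam k B)"
      by (rule sum_mono, rule mult_left_mono, rule lam_sum) (use F B in auto)
    then have "(1/pi) * (\<Sum>k=1..q. \<bar>Ik P N k\<bar> * (\<Sum>A\<in>F. lam k A)) \<le> (1/pi) * (\<Sum>k=1..q. \<bar>Ik P N k\<bar> * lam k B)"
      by (intro mult_left_mono) auto
    then show ?thesis by linarith
  qed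
  finally show ?thesis .
qed

lemma part2b_lem:
  assumes fP: "finite_measure P" and sP: "sets P = sets borel"
    and fN: "finite_measure N" and sN: "sets N = sets borel"
    and IP: "\<forall>k\<in>{1..q}. set_integrable P Cup (\<lambda>z. Im (1 / z ^ k))"
    and IN: "\<forall>k\<in>{1..q}. set_integrable N Cup (\<lambda>z. Im (1 / z ^ k))"
    and B: "B \<in> sets borel" "bounded B"
  shows "tot_var (bal q P N) B \<le> tot_var (bal 0 P N) B + ereal ((1 / pi) * (\<Sum>k=1..q. \<bar>Ik P N k\<bar> * lam k B))"
  unfolding tot_var_def
proof (rule SUP_least)
  fix F assume F: "F \<in> {F. finite F \<and> disjoint F \<and> F \<subseteq> sets borel \<and> \<Union>F \<subseteq> B}"
  define S where "S = (SUP F \<in> {F. finite F \<and> disjoint F \<and> F \<subseteq> sets borel \<and> \<Union>F \<subseteq> B}. ereal (\<Sum>A\<in>F. \<bar>bal 0 P N A\<bar>))"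
  define L where "L = (1/pi) * (\<Sum>k=1..q. \<bar>Ik P N k\<bar> * lam k B)"
  have r: "(\<Sum>A\<in>F. \<bar>bal q P N A\<bar>) \<le> (\<Sum>A\<in>F. \<bar>bal 0 P N A\<bar>) + L"
    unfolding L_def using F by (intro part2b_real[OF fP sP fN sN IP IN B]) auto
  have "ereal (\<Sum>A\<in>F. \<bar>bal 0 P N A\<bar>) \<le> S"
    unfolding S_def by (rule SUP_upper[OF F])
  then have s: "ereal (\<Sum>A\<in>F. \<bar>bal 0 P N A\<bar>) + ereal L \<le> S + ereal L"
    by (rule add_right_mono)
  have "ereal (\<Sum>A\<in>F. \<bar>bal q P N A\<bar>) \<le> ereal (\<Sum>A\<in>F. \<bar>bal 0 P N A\<bar>) + ereal L"
    using r by simp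
  then have "ereal (\<Sum>A\<in>F. \<bar>bal q P N A\<bar>) \<le> S + ereal L" using s by (rule order_trans)
  then show "ereal (\<Sum>A\<in>F. \<bar>bal q P N A\<bar>) \<le> S + ereal ((1 / pi) * (\<Sum>k=1..q. \<bar>Ik P N k\<bar> * lam k B))"
    by (simp add: L_def)
qed

lemma bal0_nonneg:
  assumes charge: "jordan_charge P N" and pos: "\<forall>B\<in>sets borel. 0 \<le> chg P N B"
    and A: "A \<in> sets borel" "bounded A"
  shows "0 \<le> bal 0 P N A"
proof -
  have AEF: "AE x in N. False" by (rule N_null[OF charge pos])
  have n0: "(LINT z:Cup|N. Omega 0 z A) = 0"
    unfolding set_lebesgue_integral_def by (rule integral_eq_zero_AE) (rule AE_mp[OF AEF], simp)
  have p0: "0 \<le> (LINT z:Cup|P. Omega 0 z A)"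
    unfolding set_lebesgue_integral_def
    by (rule Bochner_Integration.integral_nonneg) (use omega_bounds(1)[OF A] in \<open>auto simp: indicator_def Cup_def Omega_def\<close>)
  have "A \<inter> Clw \<in> sets borel" using A Cup_borel by (auto simp: Clw_def)
  then have "0 \<le> chg P N (A \<inter> Clw)" using pos by blast
  then show ?thesis using n0 p0 by (simp add: bal_def cint_def)
qed

lemma part3_lem:
  assumes fP: "finite_measure P" and sP: "sets P = sets borel"
    and fN: "finite_measure N" and sN: "sets N = sets borel"
    and IP: "\<forall>k\<in>{1..q}. set_integrable P Cup (\<lambda>z. Im (1 / z ^ k))"
    and IN: "\<forall>k\<in>{1..q}. set_integrable N Cup (\<lambda>z. Im (1 / z ^ k))"
    and charge: "jordan_charge P N" and pos: "\<forall>B\<in>sets borel. 0 \<le> chg P N B"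
    and B: "B \<in> sets borel" "bounded B"
  shows "neg_var (bal q P N) B \<le> ereal ((1 / pi) * (\<Sum>k=1..q. \<bar>Ik P N k\<bar> * lam k B))"
  unfolding neg_var_def
proof (rule SUP_least)
  fix A assume A0: "A \<in> {A. A \<in> sets borel \<and> A \<subseteq> B}"
  then have A1: "A \<in> sets borel" and AB: "A \<subseteq> B" by auto
  have A2: "bounded A" using bounded_subset[OF B(2) AB] .
  note A = A1 A2
  have "- bal q P N A \<le> (1/pi) * (\<Sum>k=1..q. \<bar>Ik P N k\<bar> * lam k A)"
    using key_bounds(2)[OF fP sP fN sN IP IN A] bal0_nonneg[OF charge pos A] by linarith
  also have "\<dots> \<le> (1/pi) * (\<Sum>k=1..q. \<bar>Ik P N k\<bar> * lam k B)"
  proof -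
    have "(\<Sum>k=1..q. \<bar>Ik P N k\<bar> * lam k A) \<le> (\<Sum>k=1..q. \<bar>Ik P N k\<bar> * lam k B)"
      by (rule sum_mono, rule mult_left_mono, rule lam_mono[OF A1 AB B]) auto
    then show ?thesis by (intro mult_left_mono) auto
  qed
  finally show "ereal (- bal q P N A) \<le> ereal ((1/pi) * (\<Sum>k=1..q. \<bar>Ik P N k\<bar> * lam k B))" by simp
qed

theorem mainTheorem8:
  fixes P N :: "complex measure" and q :: nat
  assumes charge: "jordan_charge P N"
    and supp: "compact_support P N"
    and conv: "\<exists>r0>0. \<forall>k\<in>{1..q}.
        set_integrable P (ball 0 r0 \<inter> Cup) (\<lambda>z. Im (1 / z ^ k)) \<and>
        set_integrable N (ball 0 r0 \<inter> Cup) (\<lambda>z. Im (1 / z ^ k))"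
  shows "(\<forall>t::real. distR (bal q P N) t =
            distR (bal 0 P N) t +
            (1 / pi) * (\<Sum>k=1..q. cint P N Cup (\<lambda>z. Im (1 / z ^ k)) * t ^ k / real k))
       \<and> (\<forall>B. B \<in> sets borel \<and> bounded B \<longrightarrow>
            pos_var (bal q P N) B \<le> tot_var (bal q P N) B \<and>
            tot_var (bal q P N) B \<le> tot_var (bal 0 P N) B +
              ereal ((1 / pi) * (\<Sum>k=1..q. \<bar>cint P N Cup (\<lambda>z. Im (1 / z ^ k))\<bar> * lam k B)))
       \<and> ((\<forall>B\<in>sets borel. 0 \<le> chg P N B) \<longrightarrow>
          (\<forall>B. B \<in> sets borel \<and> bounded B \<longrightarrow>
            neg_var (bal q P N) B \<le>
              ereal ((1 / pi) * (\<Sum>k=1..q. \<bar>cint P N Cup (\<lambda>z. Im (1 / z ^ k))\<bar> * lam k B))))"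
proof -
  have sP: "sets P = sets borel" and sN: "sets N = sets borel"
    and fP: "finite_measure P" and fN: "finite_measure N"
    using charge unfolding jordan_charge_def by auto
  from conv obtain r0 where r0: "r0 > 0" and cv: "\<forall>k\<in>{1..q}.
        set_integrable P (ball 0 r0 \<inter> Cup) (\<lambda>z. Im (1 / z ^ k)) \<and>
        set_integrable N (ball 0 r0 \<inter> Cup) (\<lambda>z. Im (1 / z ^ k))" by blast
  have IP: "\<forall>k\<in>{1..q}. set_integrable P Cup (\<lambda>z. Im (1 / z ^ k))"
    using Im_pow_int[OF fP sP r0] cv by blast
  have IN: "\<forall>k\<in>{1..q}. set_integrable N Cup (\<lambda>z. Im (1 / z ^ k))"
    using Im_pow_int[OF fN sN r0] cv by blast
  note H = fP sP fN sN IP IN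
  show ?thesis
    using part1_lem[OF H] part2a_lem part2b_lem[OF H] part3_lem[OF H charge]
    unfolding Ik_def by blast
qed

end
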